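(* Let $\Omega\subset\mathbb{R}^2$ be an open domain and $z\in C^2(\Omega)$ a solution of $Az_{xx}+2Bz_{xy}+Cz_{yy}+z_{xx}z_{yy}-z_{xy}^2=E$, with $A,B,C,E\in C^2(\mathcal{U})$, $AC-B^2+E>0$ on $\mathcal{U}$, such that the closure of $\{(x,y,z,z_x,z_y)(x,y):(x,y)\in\Omega\}$ is a compact subset of $\mathcal{U}$. Let $\varepsilon\in\{-1,1\}$ be such that $\varepsilon\big((z_{xx}+C)dx^2+2(z_{xy}-B)dxdy+(z_{yy}+A)dy^2\big)$ is positive definite on $\Omega$. Then there exist constants $a,c>0$ such that the function $z^*(x,y)=z(x,y)+\frac{\varepsilon a}{2}x^2+\frac{\varepsilon c}{2}y^2$ has a locally strictly convex graph $\{(x,y,z^*(x,y))\}\subset\mathbb{R}^3$ (i.e. $\varepsilon D^2z^*$ is positive definite on $\Omega$).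
   Context: $\mathcal{U}\subset\mathbb{R}^5$ is open with coordinates $(x,y,z,p,q)$; coefficients are evaluated at $(x,y,z,z_x,z_y)$. The ellipticity $AC-B^2+E>0$ guarantees that the quadratic form above is definite, so such $\varepsilon$ exists (on connected $\Omega$). *)

theory Defs
  imports "HOL-Analysis.Analysis"
begin

definition dirderiv :: "('a::real_normed_vector \<Rightarrow> real) \<Rightarrow> 'a \<Rightarrow> 'a \<Rightarrow> real" where
  "dirderiv f v x = deriv (\<lambda>t. f (x + t *\<^sub>R v)) 0"

definition C1_on :: "'a::euclidean_space set \<Rightarrow> ('a \<Rightarrow> real) \<Rightarrow> bool" where
  "C1_on S f \<longleftrightarrow> continuous_on S f \<and>
     (\<forall>i\<in>Basis. \<forall>x\<in>S. (\<lambda>t. f (x + t *\<^sub>R i)) differentiable (at 0)) \<and>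
     (\<forall>i\<in>Basis. continuous_on S (dirderiv f i))"

definition C2_on :: "'a::euclidean_space set \<Rightarrow> ('a \<Rightarrow> real) \<Rightarrow> bool" where
  "C2_on S f \<longleftrightarrow> C1_on S f \<and> (\<forall>i\<in>Basis. C1_on S (dirderiv f i))"

definition px :: "(real \<times> real \<Rightarrow> real) \<Rightarrow> real \<times> real \<Rightarrow> real" where
  "px f = dirderiv f (1, 0)"
definition py :: "(real \<times> real \<Rightarrow> real) \<Rightarrow> real \<times> real \<Rightarrow> real" where
  "py f = dirderiv f (0, 1)"

definition jet1 :: "(real \<times> real \<Rightarrow> real) \<Rightarrow> real \<times> real \<Rightarrow> real \<times> real \<times> real \<times> real \<times> real" where
  "jet1 z w = (fst w, snd w, z w, px z w, py z w)"

end

theory Submission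
  imports Defs
begin


lemma quad_nonneg:
  fixes M a b c x y :: real
  assumes "a \<ge> M + 1" "c \<ge> M + 1" "\<bar>b\<bar> \<le> M"
  shows "a * x\<^sup>2 + 2 * b * x * y + c * y\<^sup>2 \<ge> 0"
proof -
  have M: "M \<ge> 0" using assms(3) by linarith
  have 1: "a * x\<^sup>2 \<ge> (M+1) * x\<^sup>2" using assms(1) by (simp add: mult_right_mono)
  have 2: "c * y\<^sup>2 \<ge> (M+1) * y\<^sup>2" using assms(2) by (simp add: mult_right_mono)
  have 3: "2 * \<bar>x * y\<bar> \<le> x\<^sup>2 + y\<^sup>2"
    using sum_squares_bound[of "\<bar>x\<bar>" "\<bar>y\<bar>"] by (simp add: abs_mult power2_eq_square)
  have 4: "\<bar>2 * b * x * y\<bar> \<le> M * (2 * \<bar>x * y\<bar>)"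
    using assms(3) by (simp add: abs_mult mult_right_mono mult.assoc)
  have 5: "M * (2 * \<bar>x * y\<bar>) \<le> M * (x\<^sup>2 + y\<^sup>2)" using 3 M by (simp add: mult_left_mono)
  have "x\<^sup>2 \<ge> 0" "y\<^sup>2 \<ge> 0" by auto
  then have 6: "2 * b * x * y \<ge> - (M * (x\<^sup>2 + y\<^sup>2))" using 4 5 by linarith
  have 7: "(M+1) * x\<^sup>2 + (M+1) * y\<^sup>2 - M * (x\<^sup>2 + y\<^sup>2) = x\<^sup>2 + y\<^sup>2" by (simp add: algebra_simps)
  show ?thesis using 1 2 6 7 \<open>x\<^sup>2 \<ge> 0\<close> \<open>y\<^sup>2 \<ge> 0\<close> by linarith
qed

lemma key:
  fixes e r s t Av Bv Cv M x y :: real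
  assumes "e \<in> {-1, 1}" "\<bar>Av\<bar> \<le> M" "\<bar>Bv\<bar> \<le> M" "\<bar>Cv\<bar> \<le> M"
    and H: "e * ((r + Cv) * x\<^sup>2 + 2 * (s - Bv) * x * y + (t + Av) * y\<^sup>2) > 0"
  shows "e * ((r + e * (2*M+1)) * x\<^sup>2 + 2 * s * x * y + (t + e * (2*M+1)) * y\<^sup>2) > 0"
proof -
  have ee: "e * e = 1" using assms(1) by auto
  have ab: "\<bar>e * Av\<bar> \<le> M" "\<bar>e * Bv\<bar> \<le> M" "\<bar>e * Cv\<bar> \<le> M" using assms(1-4) by (auto simp: abs_mult)
  have Q: "(2*M+1 - e*Cv) * x\<^sup>2 + 2 * (e*Bv) * x * y + (2*M+1 - e*Av) * y\<^sup>2 \<ge> 0"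
    by (rule quad_nonneg[where M=M]) (use ab in \<open>auto simp: abs_le_iff\<close>)
  have eq: "e * ((r + e * (2*M+1)) * x\<^sup>2 + 2 * s * x * y + (t + e * (2*M+1)) * y\<^sup>2)
     = e * ((r + Cv) * x\<^sup>2 + 2 * (s - Bv) * x * y + (t + Av) * y\<^sup>2)
       + ((2*M+1 - e*Cv) * x\<^sup>2 + 2 * (e*Bv) * x * y + (2*M+1 - e*Av) * y\<^sup>2)"
    using assms(1) by (auto simp: algebra_simps)
  show ?thesis using eq Q H by linarith
qed

lemma aux2:
  fixes f :: "real \<Rightarrow> real"
  assumes "(f has_field_derivative D) (at 0)"
  shows "((\<lambda>t. f t + k * (p + t * r) + l * (q + t * s)) has_field_derivative D + k * r + l * s) (at 0)"
  using assms by (auto intro!: derivative_eq_intros simp: field_simps)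

lemma deriv_shift:
  fixes f g :: "real \<times> real \<Rightarrow> real"
  assumes "open S" "w \<in> S" "\<And>v. v \<in> S \<Longrightarrow> g v = f v + k * (fst v) + l * snd v"
    and d: "(\<lambda>t. f (w + t *\<^sub>R u)) differentiable (at 0)"
  shows "dirderiv g u w = dirderiv f u w + k * fst u + l * snd u"
proof -
  have cont: "isCont (\<lambda>t::real. w + t *\<^sub>R u) 0" by (intro continuous_intros)
  have "eventually (\<lambda>t. w + t *\<^sub>R u \<in> S) (at 0)"
    using cont assms(1,2) unfolding isCont_def tendsto_def by auto
  then have "eventually (\<lambda>t. w + t *\<^sub>R u \<in> S) (nhds 0)"
    using assms(2) by (simp add: eventually_nhds_conv_at)
  then have ev: "eventually (\<lambda>t. g (w + t *\<^sub>R u) = f (w + t *\<^sub>R u) + k * (fst w + t * fst u) + l * (snd w + t * snd u)) (nhds 0)"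
    by (rule eventually_mono) (simp add: assms(3))
  from d have D: "((\<lambda>t. f (w + t *\<^sub>R u)) has_field_derivative deriv (\<lambda>t. f (w + t *\<^sub>R u)) 0) (at 0)"
    using DERIV_deriv_iff_real_differentiable by blast
  have "deriv (\<lambda>t. f (w + t *\<^sub>R u) + k * (fst w + t * fst u) + l * (snd w + t * snd u)) 0 = 
      deriv (\<lambda>t. f (w + t *\<^sub>R u)) 0 + k * fst u + l * snd u" by (rule DERIV_imp_deriv[OF aux2[OF D]])
  moreover have "deriv (\<lambda>t. g (w + t *\<^sub>R u)) 0 = deriv (\<lambda>t. f (w + t *\<^sub>R u) + k * (fst w + t * fst u) + l * (snd w + t * snd u)) 0"
    by (rule deriv_cong_ev[OF ev refl])
  ultimately show ?thesis unfolding dirderiv_def by simp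
qed

lemma zs_fun:
  fixes z :: "real \<times> real \<Rightarrow> real" and e a c :: real
  shows "(\<lambda>t. (\<lambda>(x, y). z (x, y) + e * a / 2 * x\<^sup>2 + e * c / 2 * y\<^sup>2) (v + t *\<^sub>R u))
      = (\<lambda>t. z (v + t *\<^sub>R u) + (e * a / 2 * (fst v)\<^sup>2 + e * c / 2 * (snd v)\<^sup>2)
             + (e * a * fst v * fst u + e * c * snd v * snd u) * t
             + (e * a / 2 * (fst u)\<^sup>2 + e * c / 2 * (snd u)\<^sup>2) * t\<^sup>2)"
  by (rule ext, cases v, cases u) (simp add: power2_eq_square field_simps)

lemma aux3:
  fixes f :: "real \<Rightarrow> real"
  assumes "(f has_field_derivative D) (at 0)"
  shows "((\<lambda>t. f t + m + k * t + l * t\<^sup>2) has_field_derivative D + k) (at 0)"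
  using assms by (auto intro!: derivative_eq_intros simp: field_simps)

lemma slice_d:
  fixes z :: "real \<times> real \<Rightarrow> real" and e a c :: real
  assumes d: "(\<lambda>t. z (v + t *\<^sub>R u)) differentiable (at 0)"
  shows "dirderiv (\<lambda>(x, y). z (x, y) + e * a / 2 * x\<^sup>2 + e * c / 2 * y\<^sup>2) u v
     = dirderiv z u v + e * a * fst v * fst u + e * c * snd v * snd u"
proof -
  from d have D: "((\<lambda>t. z (v + t *\<^sub>R u)) has_field_derivative deriv (\<lambda>t. z (v + t *\<^sub>R u)) 0) (at 0)"
    using DERIV_deriv_iff_real_differentiable by blast
  show ?thesis unfolding dirderiv_def zs_fun
    by (subst DERIV_imp_deriv[OF aux3[OF D]]) simp
qed


theorem mainTheorem7:
  fixes \<Omega> :: "(real \<times> real) set"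
    and U :: "(real \<times> real \<times> real \<times> real \<times> real) set"
    and z :: "real \<times> real \<Rightarrow> real"
    and A B C E :: "real \<times> real \<times> real \<times> real \<times> real \<Rightarrow> real"
    and \<epsilon> :: real
  assumes "open \<Omega>" and "connected \<Omega>"
    and "open U"
    and "C2_on \<Omega> z"
    and "C2_on U A" and "C2_on U B" and "C2_on U C" and "C2_on U E"
    and "\<forall>u\<in>U. A u * C u - (B u)\<^sup>2 + E u > 0"
    and "compact (closure (jet1 z ` \<Omega>))" and "closure (jet1 z ` \<Omega>) \<subseteq> U"
    and "\<forall>w\<in>\<Omega>. A (jet1 z w) * px (px z) w + 2 * B (jet1 z w) * py (px z) w
                 + C (jet1 z w) * py (py z) w + px (px z) w * py (py z) w - (py (px z) w)\<^sup>2
               = E (jet1 z w)"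
    and "\<epsilon> \<in> {-1, 1}"
    and "\<forall>w\<in>\<Omega>. \<forall>\<xi> \<eta>. (\<xi>, \<eta>) \<noteq> (0, 0) \<longrightarrow>
           \<epsilon> * ((px (px z) w + C (jet1 z w)) * \<xi>\<^sup>2
                + 2 * (py (px z) w - B (jet1 z w)) * \<xi> * \<eta>
                + (py (py z) w + A (jet1 z w)) * \<eta>\<^sup>2) > 0"
  shows "\<exists>a c. a > 0 \<and> c > 0 \<and>
           (let zs = (\<lambda>(x, y). z (x, y) + \<epsilon> * a / 2 * x\<^sup>2 + \<epsilon> * c / 2 * y\<^sup>2)
            in \<forall>w\<in>\<Omega>. \<forall>\<xi> \<eta>. (\<xi>, \<eta>) \<noteq> (0, 0) \<longrightarrow>
                 \<epsilon> * (px (px zs) w * \<xi>\<^sup>2 + 2 * py (px zs) w * \<xi> * \<eta>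
                      + py (py zs) w * \<eta>\<^sup>2) > 0)"
  proof -
  note as = assms
  define K where "K = closure (jet1 z ` \<Omega>)"
  have Kc: "compact K" and KU: "K \<subseteq> U" using assms(10,11) by (auto simp: K_def)
  have "continuous_on U A" using assms(5) unfolding C2_on_def C1_on_def by (elim conjE)
  then have cA: "continuous_on K A" using KU by (rule continuous_on_subset)
  have "continuous_on U B" using assms(6) unfolding C2_on_def C1_on_def by (elim conjE)
  then have cB: "continuous_on K B" using KU by (rule continuous_on_subset)
  have "continuous_on U C" using assms(7) unfolding C2_on_def C1_on_def by (elim conjE)
  then have cC: "continuous_on K C" using KU by (rule continuous_on_subset)
  obtain MA where MA: "\<And>u. u \<in> K \<Longrightarrow> norm (A u) \<le> MA" "MA \<ge> 0" using continuous_on_compact_bound[OF Kc cA] by blast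
  obtain MB where MB: "\<And>u. u \<in> K \<Longrightarrow> norm (B u) \<le> MB" "MB \<ge> 0" using continuous_on_compact_bound[OF Kc cB] by blast
  obtain MC where MC: "\<And>u. u \<in> K \<Longrightarrow> norm (C u) \<le> MC" "MC \<ge> 0" using continuous_on_compact_bound[OF Kc cC] by blast
  define M where "M = MA + MB + MC"
  have M0: "M \<ge> 0" using MA MB MC by (simp add: M_def)
  have jK: "\<And>w. w \<in> \<Omega> \<Longrightarrow> jet1 z w \<in> K" unfolding K_def using closure_subset[of "jet1 z ` \<Omega>"] by (simp add: image_subset_iff)
  have bA: "\<And>w. w \<in> \<Omega> \<Longrightarrow> \<bar>A (jet1 z w)\<bar> \<le> M"
  proof -
    fix w assume "w \<in> \<Omega>"
    then have "norm (A (jet1 z w)) \<le> MA" using MA(1) jK by blast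
    then show "\<bar>A (jet1 z w)\<bar> \<le> M" using MA(2) MB(2) MC(2) unfolding M_def by simp
  qed
  have bB: "\<And>w. w \<in> \<Omega> \<Longrightarrow> \<bar>B (jet1 z w)\<bar> \<le> M"
  proof -
    fix w assume "w \<in> \<Omega>"
    then have "norm (B (jet1 z w)) \<le> MB" using MB(1) jK by blast
    then show "\<bar>B (jet1 z w)\<bar> \<le> M" using MA(2) MB(2) MC(2) unfolding M_def by simp
  qed
  have bC: "\<And>w. w \<in> \<Omega> \<Longrightarrow> \<bar>C (jet1 z w)\<bar> \<le> M"
  proof -
    fix w assume "w \<in> \<Omega>"
    then have "norm (C (jet1 z w)) \<le> MC" using MC(1) jK by blast
    then show "\<bar>C (jet1 z w)\<bar> \<le> M" using MA(2) MB(2) MC(2) unfolding M_def by simp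
  qed
  have b10: "(1::real,0::real) \<in> Basis" and b01: "(0::real,1::real) \<in> Basis" by (auto simp: Basis_prod_def)
  have C1z: "C1_on \<Omega> z" and C1px: "C1_on \<Omega> (px z)" and C1py: "C1_on \<Omega> (py z)"
    using assms(4) b10 b01 unfolding C2_on_def px_def py_def by auto
  have dz: "\<And>v u. u \<in> Basis \<Longrightarrow> v \<in> \<Omega> \<Longrightarrow> (\<lambda>t. z (v + t *\<^sub>R u)) differentiable (at 0)"
    using C1z unfolding C1_on_def by (elim conjE) blast
  have dpx: "\<And>v u. u \<in> Basis \<Longrightarrow> v \<in> \<Omega> \<Longrightarrow> (\<lambda>t. px z (v + t *\<^sub>R u)) differentiable (at 0)"
    using C1px unfolding C1_on_def by (elim conjE) blast
  have dpy: "\<And>v u. u \<in> Basis \<Longrightarrow> v \<in> \<Omega> \<Longrightarrow> (\<lambda>t. py z (v + t *\<^sub>R u)) differentiable (at 0)"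
    using C1py unfolding C1_on_def by (elim conjE) blast
  define a where "a = 2*M+1"
  let ?zs = "(\<lambda>(x, y). z (x, y) + \<epsilon> * a / 2 * x\<^sup>2 + \<epsilon> * a / 2 * y\<^sup>2)"
  have pxzs: "\<And>v. v \<in> \<Omega> \<Longrightarrow> px ?zs v = px z v + (\<epsilon> * a) * fst v + 0 * snd v"
    unfolding px_def by (subst slice_d[OF dz[OF b10]]) auto
  have pyzs: "\<And>v. v \<in> \<Omega> \<Longrightarrow> py ?zs v = py z v + 0 * fst v + (\<epsilon> * a) * snd v"
    unfolding py_def by (subst slice_d[OF dz[OF b01]]) auto
  have main: "\<forall>w\<in>\<Omega>. \<forall>\<xi> \<eta>. (\<xi>, \<eta>) \<noteq> (0, 0) \<longrightarrow>
                 \<epsilon> * (px (px ?zs) w * \<xi>\<^sup>2 + 2 * py (px ?zs) w * \<xi> * \<eta>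
                      + py (py ?zs) w * \<eta>\<^sup>2) > 0"
  proof (intro ballI allI impI)
    fix w \<xi> \<eta> assume w: "w \<in> \<Omega>" and ne: "(\<xi>, \<eta>) \<noteq> (0::real, 0::real)"
    have h1: "px (px ?zs) w = px (px z) w + \<epsilon> * a"
      unfolding px_def[of "px ?zs"] px_def[of "px z"]
      by (subst deriv_shift[OF assms(1) w pxzs dpx[OF b10 w]]) auto
    have h2: "py (px ?zs) w = py (px z) w"
      unfolding py_def[of "px ?zs"] py_def[of "px z"]
      by (subst deriv_shift[OF assms(1) w pxzs dpx[OF b01 w]]) auto
    have h3: "py (py ?zs) w = py (py z) w + \<epsilon> * a"
      unfolding py_def[of "py ?zs"] py_def[of "py z"]
      by (subst deriv_shift[OF assms(1) w pyzs dpy[OF b01 w]]) auto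
    have H: "\<epsilon> * ((px (px z) w + C (jet1 z w)) * \<xi>\<^sup>2
                + 2 * (py (px z) w - B (jet1 z w)) * \<xi> * \<eta>
                + (py (py z) w + A (jet1 z w)) * \<eta>\<^sup>2) > 0" using assms(14) w ne by blast
    show "\<epsilon> * (px (px ?zs) w * \<xi>\<^sup>2 + 2 * py (px ?zs) w * \<xi> * \<eta> + py (py ?zs) w * \<eta>\<^sup>2) > 0"
      unfolding h1 h2 h3 unfolding a_def by (rule key[OF assms(13) bA[OF w] bB[OF w] bC[OF w] H])
  qed
  have "a > 0" using M0 by (simp add: a_def)
  then show ?thesis using main by (intro exI[of _ a]) (simp add: Let_def)
qed

end
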